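(* Let $Q$ be a quiver whose underlying unoriented graph is a tree, and let $\mathbb V$ be an indecomposable representation of $Q$ over $\mathbb{F}_1$. Then every entry of the dimension vector $(\dim V_i)_{i\in I}$ is $0$ or $1$, the set of vertices $i$ with $\dim V_i=1$ spans a connected subgraph of $Q$, and every edge map between two one-dimensional spaces is an isomorphism. Consequently indecomposable representations of $Q$ (up to isomorphism) correspond bijectively to nonempty connected subgraphs of $Q$.
   Context: $\mathrm{Vect}_{\mathbb{F}_1}$: finite pointed sets $(V,0_V)$ with pointed maps injective on the complement of the preimage of the base point; $\dim V=|V|-1$; $V\oplus W$ is $V\sqcup W$ with base points identified. A representation $\mathbb V=(V_i,f_h)$ of a quiver $Q$ (vertices $I$, edges $E$, $h'$/$h''$ source/target) over $\mathbb{F}_1$ consists of $V_i\in\mathrm{Vect}_{\mathbb{F}_1}$ and morphisms $f_h:V_{h'}\to V_{h''}$; direct sums are vertexwise; $\mathbb V$ is indecomposable if nonzero and not a direct sum of two nonzero representations. A quiver is a tree if its underlying unoriented graph contains no cycles and no multiple edges. The dimension vector of $\mathbb V$ is $(\dim V_i)_{i\in I}$. *)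

theory Defs
  imports Main
begin

text \<open>An object of Vect_F1 is a finite set V (a subset of some ambient type) with a
base point z in V. Its dimension is |V| - 1.\<close>

definition f1_space :: "'a set \<Rightarrow> 'a \<Rightarrow> bool" where
  "f1_space V z \<longleftrightarrow> finite V \<and> z \<in> V"

definition f1_dim :: "'a set \<Rightarrow> nat" where
  "f1_dim V = card V - 1"

definition f1_morph :: "'a set \<Rightarrow> 'a \<Rightarrow> 'b set \<Rightarrow> 'b \<Rightarrow> ('a \<Rightarrow> 'b) \<Rightarrow> bool" where
  "f1_morph V z W w f \<longleftrightarrow> f ` V \<subseteq> W \<and> f z = w \<and> inj_on f (V - f -` {w})"

text \<open>An isomorphism in Vect_F1: a bijective morphism (its inverse is then
automatically a morphism).\<close>

definition f1_iso :: "'a set \<Rightarrow> 'a \<Rightarrow> 'b set \<Rightarrow> 'b \<Rightarrow> ('a \<Rightarrow> 'b) \<Rightarrow> bool" where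
  "f1_iso V z W w f \<longleftrightarrow> f1_morph V z W w f \<and> bij_betw f V W"

definition quiver :: "'v set \<Rightarrow> 'e set \<Rightarrow> ('e \<Rightarrow> 'v) \<Rightarrow> ('e \<Rightarrow> 'v) \<Rightarrow> bool" where
  "quiver I E src tgt \<longleftrightarrow> finite I \<and> finite E \<and> (\<forall>h\<in>E. src h \<in> I \<and> tgt h \<in> I)"

text \<open>A cycle in the underlying unoriented (multi)graph: distinct edges e_0..e_(n-1),
n >= 1, and distinct vertices v_0..v_(n-1) such that e_k joins v_k and v_(k+1 mod n).
(Loops are cycles of length 1, a pair of parallel edges a cycle of length 2.)\<close>

definition unoriented_cycle ::
  "'e set \<Rightarrow> ('e \<Rightarrow> 'v) \<Rightarrow> ('e \<Rightarrow> 'v) \<Rightarrow> 'v list \<Rightarrow> 'e list \<Rightarrow> bool" where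
  "unoriented_cycle E src tgt vs es \<longleftrightarrow>
     length es \<ge> 1 \<and> length vs = length es \<and> distinct es \<and> distinct vs \<and> set es \<subseteq> E \<and>
     (\<forall>k < length es. {src (es ! k), tgt (es ! k)} = {vs ! k, vs ! ((k + 1) mod length es)})"

definition no_multiple_edges :: "'e set \<Rightarrow> ('e \<Rightarrow> 'v) \<Rightarrow> ('e \<Rightarrow> 'v) \<Rightarrow> bool" where
  "no_multiple_edges E src tgt \<longleftrightarrow>
     (\<forall>h\<in>E. \<forall>h'\<in>E. {src h, tgt h} = {src h', tgt h'} \<longrightarrow> h = h')"

definition tree_quiver :: "'v set \<Rightarrow> 'e set \<Rightarrow> ('e \<Rightarrow> 'v) \<Rightarrow> ('e \<Rightarrow> 'v) \<Rightarrow> bool" where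
  "tree_quiver I E src tgt \<longleftrightarrow> quiver I E src tgt \<and>
     (\<nexists>vs es. unoriented_cycle E src tgt vs es) \<and> no_multiple_edges E src tgt"

definition adj_in :: "'e set \<Rightarrow> ('e \<Rightarrow> 'v) \<Rightarrow> ('e \<Rightarrow> 'v) \<Rightarrow> 'v set \<Rightarrow> 'v \<Rightarrow> 'v \<Rightarrow> bool" where
  "adj_in E src tgt S u v \<longleftrightarrow> u \<in> S \<and> v \<in> S \<and>
     (\<exists>h\<in>E. (src h = u \<and> tgt h = v) \<or> (src h = v \<and> tgt h = u))"

definition connected_in :: "'e set \<Rightarrow> ('e \<Rightarrow> 'v) \<Rightarrow> ('e \<Rightarrow> 'v) \<Rightarrow> 'v set \<Rightarrow> bool" where
  "connected_in E src tgt S \<longleftrightarrow> (\<forall>u\<in>S. \<forall>v\<in>S. (adj_in E src tgt S)\<^sup>*\<^sup>* u v)"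

record ('v, 'e, 'a) rep =
  sp :: "'v \<Rightarrow> 'a set"
  bp :: "'v \<Rightarrow> 'a"
  mp :: "'e \<Rightarrow> 'a \<Rightarrow> 'a"

definition is_rep :: "'v set \<Rightarrow> 'e set \<Rightarrow> ('e \<Rightarrow> 'v) \<Rightarrow> ('e \<Rightarrow> 'v) \<Rightarrow> ('v, 'e, 'a) rep \<Rightarrow> bool" where
  "is_rep I E src tgt R \<longleftrightarrow>
     (\<forall>i\<in>I. f1_space (sp R i) (bp R i)) \<and>
     (\<forall>h\<in>E. f1_morph (sp R (src h)) (bp R (src h)) (sp R (tgt h)) (bp R (tgt h)) (mp R h))"

definition rep_nonzero :: "'v set \<Rightarrow> ('v, 'e, 'a) rep \<Rightarrow> bool" where
  "rep_nonzero I R \<longleftrightarrow> (\<exists>i\<in>I. f1_dim (sp R i) \<noteq> 0)"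

text \<open>R is the (internal) direct sum of the subrepresentations U and W: vertexwise
V_i = U_i \<or> W_i with base points identified, U_i \<inter> W_i = {0}, and the maps of U and W
are the restrictions of those of R.\<close>

definition is_direct_sum ::
  "'v set \<Rightarrow> 'e set \<Rightarrow> ('e \<Rightarrow> 'v) \<Rightarrow> ('e \<Rightarrow> 'v) \<Rightarrow>
   ('v, 'e, 'a) rep \<Rightarrow> ('v, 'e, 'a) rep \<Rightarrow> ('v, 'e, 'a) rep \<Rightarrow> bool" where
  "is_direct_sum I E src tgt R U W \<longleftrightarrow>
     is_rep I E src tgt U \<and> is_rep I E src tgt W \<and>
     (\<forall>i\<in>I. sp U i \<union> sp W i = sp R i \<and> sp U i \<inter> sp W i = {bp R i} \<and>
            bp U i = bp R i \<and> bp W i = bp R i) \<and>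
     (\<forall>h\<in>E. (\<forall>x\<in>sp U (src h). mp U h x = mp R h x) \<and>
            (\<forall>x\<in>sp W (src h). mp W h x = mp R h x))"

definition indecomposable ::
  "'v set \<Rightarrow> 'e set \<Rightarrow> ('e \<Rightarrow> 'v) \<Rightarrow> ('e \<Rightarrow> 'v) \<Rightarrow> ('v, 'e, 'a) rep \<Rightarrow> bool" where
  "indecomposable I E src tgt R \<longleftrightarrow> is_rep I E src tgt R \<and> rep_nonzero I R \<and>
     \<not> (\<exists>U W. rep_nonzero I U \<and> rep_nonzero I W \<and> is_direct_sum I E src tgt R U W)"

definition rep_iso ::
  "'v set \<Rightarrow> 'e set \<Rightarrow> ('e \<Rightarrow> 'v) \<Rightarrow> ('e \<Rightarrow> 'v) \<Rightarrow> ('v, 'e, 'a) rep \<Rightarrow> ('v, 'e, 'b) rep \<Rightarrow> bool" where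
  "rep_iso I E src tgt R R' \<longleftrightarrow>
     (\<exists>\<phi> :: 'v \<Rightarrow> 'a \<Rightarrow> 'b.
        (\<forall>i\<in>I. f1_iso (sp R i) (bp R i) (sp R' i) (bp R' i) (\<phi> i)) \<and>
        (\<forall>h\<in>E. \<forall>x\<in>sp R (src h). \<phi> (tgt h) (mp R h x) = mp R' h (\<phi> (src h) x)))"

definition dim_one_support :: "'v set \<Rightarrow> ('v, 'e, 'a) rep \<Rightarrow> 'v set" where
  "dim_one_support I R = {i \<in> I. f1_dim (sp R i) = 1}"

end

theory Submission
  imports Defs
begin

lemma walk_cycle:
  fixes v :: "nat \<Rightarrow> 'v" and e :: "nat \<Rightarrow> 'e"
  assumes "n \<ge> 1" "v n = v 0" "\<forall>m<n. e m \<in> E \<and> {src (e m), tgt (e m)} = {v m, v (Suc m)}"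
     "\<forall>m. Suc m < n \<longrightarrow> e m \<noteq> e (Suc m)"
  shows "\<exists>vs es. unoriented_cycle E src tgt vs es"
using assms
proof (induction n arbitrary: v e rule: less_induct)
  case (less n)
  show ?case
  proof (cases "inj_on v {0..<n}")
    case True
    have injv: "x = y" if "x < n" "y < n" "v x = v y" for x y
      using True that by (auto dest: inj_onD)
    have inje: "inj_on e {0..<n}"
    proof (rule inj_onI, rule ccontr)
      have key: "False" if ab: "a < b" "b < n" "e a = e b" for a b
      proof -
        have "a < n" using ab by simp
        have "{v a, v (Suc a)} = {v b, v (Suc b)}" using less.prems(3) ab \<open>a < n\<close> by metis
        moreover have "v a \<noteq> v b" using injv[of a b] ab by auto
        ultimately have 1: "v a = v (Suc b)" and 2: "v (Suc a) = v b" by (metis doubleton_eq_iff)+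
        have "Suc a = b" using 2 injv[of "Suc a" b] ab by auto
        have "Suc b = n"
        proof (rule ccontr)
          assume "Suc b \<noteq> n" then have "Suc b < n" using ab by simp
          then have "a = Suc b" using 1 injv[of a "Suc b"] ab by auto
          then show False using ab by simp
        qed
        then have "v a = v 0" using 1 less.prems(2) by simp
        then have "a = 0" using injv[of a 0] ab by auto
        then show False using less.prems(4) ab \<open>Suc a = b\<close> \<open>Suc b = n\<close> by auto
      qed
      fix a b assume "a \<in> {0..<n}" "b \<in> {0..<n}" "e a = e b" "a \<noteq> b"
      then show False using key by (metis atLeastLessThan_iff nat_neq_iff)
    qed
    have "unoriented_cycle E src tgt (map v [0..<n]) (map e [0..<n])"
      unfolding unoriented_cycle_def
    proof (intro conjI allI impI)
      show "1 \<le> length (map e [0..<n])" using less.prems by simp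
      show "length (map v [0..<n]) = length (map e [0..<n])" by simp
      show "distinct (map e [0..<n])" using inje by (simp add: distinct_map)
      show "distinct (map v [0..<n])" using True by (simp add: distinct_map)
      show "set (map e [0..<n]) \<subseteq> E" using less.prems(3) by auto
      fix k assume k: "k < length (map e [0..<n])"
      then have kn: "k < n" by simp
      have "v ((k + 1) mod n) = v (Suc k)"
      proof (cases "Suc k < n")
        case True then show ?thesis by simp
      next
        case False then have "Suc k = n" using kn by simp
        then show ?thesis using less.prems(2) by simp
      qed
      then show "{src (map e [0..<n] ! k), tgt (map e [0..<n] ! k)} =
          {map v [0..<n] ! k, map v [0..<n] ! ((k + 1) mod length (map e [0..<n]))}"
        using kn less.prems(3) by simp
    qed
    then show ?thesis by blast
  next
    case False
    then obtain a b where ab: "a < b" "b < n" "v a = v b"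
      unfolding inj_on_def by (metis atLeastLessThan_iff nat_neq_iff)
    have "\<exists>vs es. unoriented_cycle E src tgt vs es"
    proof (rule less.IH[of "b - a" "\<lambda>m. v (a + m)" "\<lambda>m. e (a + m)"])
      show "b - a < n" using ab by simp
      show "1 \<le> b - a" using ab by simp
      show "v (a + (b - a)) = v (a + 0)" using ab by simp
      show "\<forall>m<b - a. e (a + m) \<in> E \<and> {src (e (a + m)), tgt (e (a + m))} = {v (a + m), v (a + Suc m)}"
        using less.prems(3) ab by (metis add_Suc_right less_diff_conv add.commute less_trans)
      show "\<forall>m. Suc m < b - a \<longrightarrow> e (a + m) \<noteq> e (a + Suc m)"
        using less.prems(4) ab by (metis add_Suc_right less_diff_conv add.commute less_trans)
    qed
    then show ?thesis .
  qed
qed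



definition nzs :: "'v set \<Rightarrow> ('v,'e,'a) rep \<Rightarrow> ('v \<times> 'a) set" where
  "nzs I R = {(i,x). i \<in> I \<and> x \<in> sp R i \<and> x \<noteq> bp R i}"

definition wit :: "('e \<Rightarrow> 'v) \<Rightarrow> ('e \<Rightarrow> 'v) \<Rightarrow> ('v,'e,'a) rep \<Rightarrow> 'e \<Rightarrow> ('v \<times> 'a) \<Rightarrow> ('v \<times> 'a) \<Rightarrow> bool" where
  "wit src tgt R h a b \<longleftrightarrow> (fst a = src h \<and> fst b = tgt h \<and> mp R h (snd a) = snd b) \<or>
      (fst b = src h \<and> fst a = tgt h \<and> mp R h (snd b) = snd a)"

definition est where
  "est I E src tgt R a b \<longleftrightarrow> a \<in> nzs I R \<and> b \<in> nzs I R \<and> (\<exists>h\<in>E. wit src tgt R h a b)"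

definition rpath :: "('b \<Rightarrow> 'b \<Rightarrow> bool) \<Rightarrow> nat \<Rightarrow> (nat \<Rightarrow> 'b) \<Rightarrow> bool" where
  "rpath r n p \<longleftrightarrow> (\<forall>m<n. r (p m) (p (Suc m)))"

lemma est_sym: "est I E src tgt R a b \<Longrightarrow> est I E src tgt R b a"
  unfolding est_def wit_def by blast

lemma rtranclp_est_sym: "(est I E src tgt R)\<^sup>*\<^sup>* a b \<Longrightarrow> (est I E src tgt R)\<^sup>*\<^sup>* b a"
  by (induction rule: rtranclp_induct) (auto intro: converse_rtranclp_into_rtranclp est_sym)

lemma rtranclp_path: "r\<^sup>*\<^sup>* a b \<Longrightarrow> \<exists>n p. p 0 = a \<and> p n = b \<and> rpath r n p"
proof (induction rule: rtranclp_induct)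
  case base
  then show ?case by (rule exI[of _ 0], rule exI[of _ "\<lambda>_. a"]) (simp add: rpath_def)
next
  case (step b c)
  then obtain n p where p: "p 0 = a" "p n = b" "rpath r n p" by blast
  show ?case
  proof (rule exI[of _ "Suc n"], rule exI[of _ "p(Suc n := c)"], intro conjI)
    show "rpath r (Suc n) (p(Suc n := c))" using p step(2) unfolding rpath_def
      by (auto simp: less_Suc_eq)
  qed (use p in auto)
qed

lemma distinct_path: "p 0 = a \<Longrightarrow> p n = b \<Longrightarrow> rpath r n p \<Longrightarrow>
   \<exists>n p. p 0 = a \<and> p n = b \<and> rpath r n p \<and> inj_on p {0..n}"
proof (induction n arbitrary: p rule: less_induct)
  case (less n)
  show ?case
  proof (cases "inj_on p {0..n}")
    case True then show ?thesis using less.prems by blast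
  next
    case False
    then obtain i j where ij: "i < j" "j \<le> n" "p i = p j"
      unfolding inj_on_def by (metis atLeastAtMost_iff nat_neq_iff)
    define q where "q m = (if m \<le> i then p m else p (m + (j - i)))" for m
    have "q 0 = a" using less.prems by (simp add: q_def)
    moreover have "q (n - (j - i)) = b" using less.prems ij by (cases "j = n") (auto simp: q_def)
    moreover have "rpath r (n - (j - i)) q" unfolding rpath_def
    proof (intro allI impI)
      fix m assume m: "m < n - (j - i)"
      show "r (q m) (q (Suc m))"
      proof (cases "m < i")
        case True then show ?thesis using less.prems(3) m ij unfolding rpath_def q_def by auto
      next
        case False
        then have "r (p (m + (j - i))) (p (Suc (m + (j - i))))"
          using less.prems(3) m ij unfolding rpath_def by auto
        moreover have "q m = p (m + (j - i))" using False ij by (cases "m = i") (auto simp: q_def)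
        moreover have "q (Suc m) = p (Suc (m + (j - i)))" using False ij by (auto simp: q_def)
        ultimately show ?thesis by simp
      qed
    qed
    moreover have "n - (j - i) < n" using ij by simp
    ultimately show ?thesis using less.IH by blast
  qed
qed

lemma tree_noloop: "tree_quiver I E src tgt \<Longrightarrow> h \<in> E \<Longrightarrow> src h \<noteq> tgt h"
proof
  assume t: "tree_quiver I E src tgt" and h: "h \<in> E" and eq: "src h = tgt h"
  have "unoriented_cycle E src tgt [src h] [h]" using h eq unfolding unoriented_cycle_def by auto
  then show False using t unfolding tree_quiver_def by blast
qed

lemma no_backtrack:
  assumes rep: "is_rep I E src tgt R" and nl: "src h \<noteq> tgt h" and h: "h \<in> E"
    and ab: "est I E src tgt R a b" and bc: "est I E src tgt R b c"
    and w1: "wit src tgt R h a b" and w2: "wit src tgt R h b c"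
  shows "a = c"
proof -
  have inj: "inj_on (mp R h) (sp R (src h) - mp R h -` {bp R (tgt h)})"
    using rep h unfolding is_rep_def f1_morph_def by blast
  have N: "a \<in> nzs I R" "b \<in> nzs I R" "c \<in> nzs I R" using ab bc unfolding est_def by auto
  show ?thesis
  proof (cases "fst a = src h \<and> fst b = tgt h \<and> mp R h (snd a) = snd b")
    case True
    then have c: "fst c = src h" "mp R h (snd c) = snd b" using w2 nl unfolding wit_def by auto
    have "snd a = snd c"
      using inj N True c unfolding nzs_def by (auto simp: inj_on_def)
    then show ?thesis using True c by (simp add: prod_eq_iff)
  next
    case False
    then have b: "fst b = src h" "fst a = tgt h" "mp R h (snd b) = snd a" using w1 unfolding wit_def by auto
    then have c: "fst c = tgt h" "mp R h (snd b) = snd c" using w2 nl unfolding wit_def by auto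
    then show ?thesis using b by (simp add: prod_eq_iff)
  qed
qed

lemma wit_edge: "wit src tgt R h a b \<Longrightarrow> {src h, tgt h} = {fst a, fst b}"
  unfolding wit_def by auto

lemma walk_of_path:
  assumes rep: "is_rep I E src tgt R" and nl: "\<forall>h\<in>E. src h \<noteq> tgt h"
    and p: "rpath (est I E src tgt R) n p" and inj: "inj_on p {0..n}"
  shows "\<exists>e. (\<forall>m<n. e m \<in> E \<and> wit src tgt R (e m) (p m) (p (Suc m))) \<and>
             (\<forall>m. Suc m < n \<longrightarrow> e m \<noteq> e (Suc m))"
proof -
  define e where "e m = (SOME h. h \<in> E \<and> wit src tgt R h (p m) (p (Suc m)))" for m
  have e: "e m \<in> E \<and> wit src tgt R (e m) (p m) (p (Suc m))" if "m < n" for m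
    unfolding e_def by (rule someI_ex) (use p that in \<open>auto simp: rpath_def est_def\<close>)
  have "e m \<noteq> e (Suc m)" if m: "Suc m < n" for m
  proof
    assume eq: "e m = e (Suc m)"
    have "p m = p (Suc (Suc m))"
      apply (rule no_backtrack[OF rep, of "e m"])
      using nl e[of m] e[of "Suc m"] m eq p unfolding rpath_def by auto
    then show False using inj m by (auto dest: inj_onD)
  qed
  then show ?thesis using e by blast
qed



lemma card_ge2_obtain:
  assumes "finite A" "z \<in> A" "card A - 1 \<noteq> 0"
  obtains x where "x \<in> A" "x \<noteq> z"
proof -
  have "\<not> (\<forall>a\<in>A. \<forall>b\<in>A. a = b)" using assms card_le_Suc0_iff_eq[OF assms(1)] by auto
  then show ?thesis using that assms(2) by blast
qed

lemma card_two_nz: "finite A \<Longrightarrow> x \<in> A \<Longrightarrow> y \<in> A \<Longrightarrow> x \<noteq> y \<Longrightarrow> card A - 1 \<noteq> 0"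
proof -
  assume "finite A" "x \<in> A" "y \<in> A" "x \<noteq> y"
  then have "card {x, y} \<le> card A" by (intro card_mono) auto
  then show ?thesis using \<open>x \<noteq> y\<close> by simp
qed

lemma C_nzs: "(est I E src tgt R)\<^sup>*\<^sup>* a b \<Longrightarrow> a \<in> nzs I R \<Longrightarrow> b \<in> nzs I R"
  by (induction rule: rtranclp_induct) (auto simp: est_def)

lemma indec_conn:
  assumes ind: "indecomposable I E src tgt R" and q: "\<forall>h\<in>E. src h \<in> I \<and> tgt h \<in> I"
    and a: "a \<in> nzs I R" and b: "b \<in> nzs I R"
  shows "(est I E src tgt R)\<^sup>*\<^sup>* a b"
proof (rule ccontr)
  assume nc: "\<not> (est I E src tgt R)\<^sup>*\<^sup>* a b"
  let ?C = "(est I E src tgt R)\<^sup>*\<^sup>* a"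
  define U :: "('a, 'b, 'c) rep" where "U = \<lparr>sp = (\<lambda>i. {x \<in> sp R i. x = bp R i \<or> ?C (i, x)}), bp = bp R, mp = mp R\<rparr>"
  define W :: "('a, 'b, 'c) rep" where "W = \<lparr>sp = (\<lambda>i. {x \<in> sp R i. x = bp R i \<or> \<not> ?C (i, x)}), bp = bp R, mp = mp R\<rparr>"
  have rep: "is_rep I E src tgt R" using ind unfolding indecomposable_def by blast
  have sp: "finite (sp R i)" "bp R i \<in> sp R i" if "i \<in> I" for i
    using rep that unfolding is_rep_def f1_space_def by blast+
  have mo: "mp R h ` sp R (src h) \<subseteq> sp R (tgt h)" "mp R h (bp R (src h)) = bp R (tgt h)"
     "inj_on (mp R h) (sp R (src h) - mp R h -` {bp R (tgt h)})" if "h \<in> E" for h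
    using rep that unfolding is_rep_def f1_morph_def by blast+
  have repU: "is_rep I E src tgt U"
    unfolding is_rep_def f1_space_def f1_morph_def
  proof (intro conjI ballI)
    fix i assume i: "i \<in> I"
    show "finite (sp U i)" using sp[OF i] by (simp add: U_def)
    show "bp U i \<in> sp U i" using sp[OF i] by (simp add: U_def)
  next
    fix h assume h: "h \<in> E"
    show "mp U h (bp U (src h)) = bp U (tgt h)" using mo[OF h] by (simp add: U_def)
    show "inj_on (mp U h) (sp U (src h) - mp U h -` {bp U (tgt h)})"
      apply (simp add: U_def) apply (rule inj_on_subset[OF mo(3)[OF h]]) by auto
    show "mp U h ` sp U (src h) \<subseteq> sp U (tgt h)"
    proof
      fix y assume "y \<in> mp U h ` sp U (src h)"
      then obtain x where x: "x \<in> sp R (src h)" "x = bp R (src h) \<or> ?C (src h, x)" "y = mp R h x"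
        by (auto simp: U_def)
      have yin: "y \<in> sp R (tgt h)" using mo(1)[OF h] x by auto
      show "y \<in> sp U (tgt h)"
      proof (cases "y = bp R (tgt h)")
        case True then show ?thesis using yin by (simp add: U_def)
      next
        case False
        then have "x \<noteq> bp R (src h)" using x mo(2)[OF h] by auto
        then have cx: "?C (src h, x)" using x by auto
        have "est I E src tgt R (src h, x) (tgt h, y)"
          unfolding est_def wit_def nzs_def using q h x False \<open>x \<noteq> bp R (src h)\<close> yin by auto
        then have "?C (tgt h, y)" using cx by (simp add: rtranclp.rtrancl_into_rtrancl)
        then show ?thesis using yin by (simp add: U_def)
      qed
    qed
  qed
  have repW: "is_rep I E src tgt W"
    unfolding is_rep_def f1_space_def f1_morph_def
  proof (intro conjI ballI)
    fix i assume i: "i \<in> I"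
    show "finite (sp W i)" using sp[OF i] by (simp add: W_def)
    show "bp W i \<in> sp W i" using sp[OF i] by (simp add: W_def)
  next
    fix h assume h: "h \<in> E"
    show "mp W h (bp W (src h)) = bp W (tgt h)" using mo[OF h] by (simp add: W_def)
    show "inj_on (mp W h) (sp W (src h) - mp W h -` {bp W (tgt h)})"
      apply (simp add: W_def) apply (rule inj_on_subset[OF mo(3)[OF h]]) by auto
    show "mp W h ` sp W (src h) \<subseteq> sp W (tgt h)"
    proof
      fix y assume "y \<in> mp W h ` sp W (src h)"
      then obtain x where x: "x \<in> sp R (src h)" "x = bp R (src h) \<or> \<not> ?C (src h, x)" "y = mp R h x"
        by (auto simp: W_def)
      have yin: "y \<in> sp R (tgt h)" using mo(1)[OF h] x by auto
      show "y \<in> sp W (tgt h)"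
      proof (cases "y = bp R (tgt h)")
        case True then show ?thesis using yin by (simp add: W_def)
      next
        case False
        then have "x \<noteq> bp R (src h)" using x mo(2)[OF h] by auto
        then have cx: "\<not> ?C (src h, x)" using x by auto
        have "est I E src tgt R (tgt h, y) (src h, x)"
          unfolding est_def wit_def nzs_def using q h x False \<open>x \<noteq> bp R (src h)\<close> yin by auto
        then have "\<not> ?C (tgt h, y)" using cx rtranclp.rtrancl_into_rtrancl by metis
        then show ?thesis using yin by (simp add: W_def)
      qed
    qed
  qed
  have ds: "is_direct_sum I E src tgt R U W"
    unfolding is_direct_sum_def using repU repW sp by (auto simp: U_def W_def)
  obtain i x where ax: "a = (i, x)" "i \<in> I" "x \<in> sp R i" "x \<noteq> bp R i" using a unfolding nzs_def by auto
  obtain j y where bx: "b = (j, y)" "j \<in> I" "y \<in> sp R j" "y \<noteq> bp R j" using b unfolding nzs_def by auto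
  have "rep_nonzero I U" unfolding rep_nonzero_def f1_dim_def
  proof (intro bexI)
    show "card (sp U i) - 1 \<noteq> 0"
      by (rule card_two_nz[of _ x "bp R i"]) (use ax sp[OF ax(2)] in \<open>auto simp: U_def\<close>)
  qed (rule ax(2))
  moreover have "rep_nonzero I W" unfolding rep_nonzero_def f1_dim_def
  proof (intro bexI)
    show "card (sp W j) - 1 \<noteq> 0"
      by (rule card_two_nz[of _ y "bp R j"]) (use bx nc sp[OF bx(2)] in \<open>auto simp: W_def\<close>)
  qed (rule bx(2))
  ultimately show False using ind ds unfolding indecomposable_def by blast
qed



lemma tree_q: "tree_quiver I E src tgt \<Longrightarrow> \<forall>h\<in>E. src h \<in> I \<and> tgt h \<in> I"
  unfolding tree_quiver_def quiver_def by blast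

lemma tree_nl: "tree_quiver I E src tgt \<Longrightarrow> \<forall>h\<in>E. src h \<noteq> tgt h"
  using tree_noloop by metis

lemma closed_walk_false:
  assumes tree: "tree_quiver I E src tgt" and rep: "is_rep I E src tgt R"
    and p: "rpath (est I E src tgt R) n p" and inj: "inj_on p {0..n}" and n: "1 \<le> n"
    and cl: "fst (p n) = fst (p 0)"
  shows False
proof -
  obtain e where e: "\<forall>m<n. e m \<in> E \<and> wit src tgt R (e m) (p m) (p (Suc m))"
      "\<forall>m. Suc m < n \<longrightarrow> e m \<noteq> e (Suc m)"
    using walk_of_path[OF rep tree_nl[OF tree] p inj] by blast
  have w: "\<forall>m<n. e m \<in> E \<and> {src (e m), tgt (e m)} = {fst (p m), fst (p (Suc m))}"
  proof (intro allI impI conjI)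
    fix m assume m: "m < n"
    show "e m \<in> E" using e(1) m by blast
    show "{src (e m), tgt (e m)} = {fst (p m), fst (p (Suc m))}"
      using e(1) m wit_edge[of src tgt R "e m" "p m" "p (Suc m)"] by blast
  qed
  have "\<exists>vs es. unoriented_cycle E src tgt vs es"
    using walk_cycle[of n "\<lambda>m. fst (p m)" e E src tgt] n cl e(2) w by simp
  then show False using tree unfolding tree_quiver_def by blast
qed

lemma indec_card:
  assumes tree: "tree_quiver I E src tgt" and ind: "indecomposable I E src tgt R" and i: "i \<in> I"
  shows "card (sp R i) \<le> 2"
proof (rule ccontr)
  assume c: "\<not> card (sp R i) \<le> 2"
  have rep: "is_rep I E src tgt R" using ind unfolding indecomposable_def by blast
  have fin: "finite (sp R i)" and bi: "bp R i \<in> sp R i"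
    using rep i unfolding is_rep_def f1_space_def by blast+
  let ?A = "sp R i - {bp R i}"
  have "card ?A \<ge> 2" using c fin bi by (simp add: card_Diff_singleton)
  then have "\<not> card ?A \<le> Suc 0" by simp
  then obtain x y where xy: "x \<in> ?A" "y \<in> ?A" "x \<noteq> y"
    using card_le_Suc0_iff_eq[of ?A] fin by auto
  have N: "(i, x) \<in> nzs I R" "(i, y) \<in> nzs I R" using xy i unfolding nzs_def by auto
  obtain n0 p0 where "p0 0 = (i, x)" "p0 n0 = (i, y)" "rpath (est I E src tgt R) n0 p0"
    using rtranclp_path[OF indec_conn[OF ind tree_q[OF tree] N]] by blast
  then obtain n p where p: "p 0 = (i, x)" "p n = (i, y)" "rpath (est I E src tgt R) n p" "inj_on p {0..n}"
    using distinct_path by metis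
  have "n \<noteq> 0"
  proof
    assume "n = 0" with p have "(i, x) = (i, y)" by simp
    with xy show False by simp
  qed
  then show False using closed_walk_false[OF tree rep p(3,4)] p by auto
qed

lemma indec_shape:
  assumes tree: "tree_quiver I E src tgt" and ind: "indecomposable I E src tgt R" and i: "i \<in> I"
  shows "(sp R i = {bp R i} \<and> f1_dim (sp R i) = 0) \<or>
         (\<exists>x. x \<noteq> bp R i \<and> sp R i = {bp R i, x} \<and> f1_dim (sp R i) = 1)"
proof -
  have rep: "is_rep I E src tgt R" using ind unfolding indecomposable_def by blast
  have fin: "finite (sp R i)" and bi: "bp R i \<in> sp R i"
    using rep i unfolding is_rep_def f1_space_def by blast+
  have c: "card (sp R i) \<le> 2" by (rule indec_card[OF tree ind i])
  show ?thesis
  proof (cases "sp R i = {bp R i}")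
    case True then show ?thesis by (simp add: f1_dim_def)
  next
    case False
    then obtain x where x: "x \<in> sp R i" "x \<noteq> bp R i" using bi by blast
    have "sp R i = {bp R i, x}"
    proof (rule ccontr)
      assume "sp R i \<noteq> {bp R i, x}"
      then obtain y where y: "y \<in> sp R i" "y \<notin> {bp R i, x}" using bi x by blast
      have "card {bp R i, x, y} \<le> card (sp R i)" using x y bi fin by (intro card_mono) auto
      then show False using c x y by auto
    qed
    then show ?thesis using x by (auto simp: f1_dim_def)
  qed
qed

lemma indec_iso:
  assumes tree: "tree_quiver I E src tgt" and ind: "indecomposable I E src tgt R" and h: "h \<in> E"
    and d1: "f1_dim (sp R (src h)) = 1" and d2: "f1_dim (sp R (tgt h)) = 1"
  shows "f1_iso (sp R (src h)) (bp R (src h)) (sp R (tgt h)) (bp R (tgt h)) (mp R h)"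
proof -
  have rep: "is_rep I E src tgt R" using ind unfolding indecomposable_def by blast
  have mo: "f1_morph (sp R (src h)) (bp R (src h)) (sp R (tgt h)) (bp R (tgt h)) (mp R h)"
    using rep h unfolding is_rep_def by blast
  have I: "src h \<in> I" "tgt h \<in> I" using tree_q[OF tree] h by auto
  have nl: "src h \<noteq> tgt h" using tree_nl[OF tree] h by auto
  obtain x where x: "x \<noteq> bp R (src h)" "sp R (src h) = {bp R (src h), x}"
    using indec_shape[OF tree ind I(1)] d1 by auto
  obtain y where y: "y \<noteq> bp R (tgt h)" "sp R (tgt h) = {bp R (tgt h), y}"
    using indec_shape[OF tree ind I(2)] d2 by auto
  have m0: "mp R h (bp R (src h)) = bp R (tgt h)" "mp R h x \<in> {bp R (tgt h), y}"
    using mo x y unfolding f1_morph_def by auto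
  have "mp R h x = y"
  proof (rule ccontr)
    assume ne: "mp R h x \<noteq> y"
    have N: "(src h, x) \<in> nzs I R" "(tgt h, y) \<in> nzs I R" using x y I unfolding nzs_def by auto
    obtain n0 p0 where "p0 0 = (src h, x)" "p0 n0 = (tgt h, y)" "rpath (est I E src tgt R) n0 p0"
      using rtranclp_path[OF indec_conn[OF ind tree_q[OF tree] N]] by blast
    then obtain n p where p: "p 0 = (src h, x)" "p n = (tgt h, y)" "rpath (est I E src tgt R) n p" "inj_on p {0..n}"
      using distinct_path by metis
    have n: "n \<noteq> 0"
    proof
      assume "n = 0" with p have "(src h, x) = (tgt h, y)" by simp
      with nl show False by simp
    qed
    obtain e where e: "\<forall>m<n. e m \<in> E \<and> wit src tgt R (e m) (p m) (p (Suc m))"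
        "\<forall>m. Suc m < n \<longrightarrow> e m \<noteq> e (Suc m)"
      using walk_of_path[OF rep tree_nl[OF tree] p(3,4)] by blast
    have last: "e (n - 1) \<noteq> h"
    proof
      assume eh: "e (n - 1) = h"
      have w: "wit src tgt R h (p (n - 1)) (p n)" using e(1) n eh
        by (metis Suc_pred' diff_less less_one not_gr_zero)
      have pn1: "p (n - 1) \<in> nzs I R" using p(3) n unfolding rpath_def est_def
        by (metis diff_less less_one not_gr_zero)
      show False
      proof (cases "fst (p (n - 1)) = src h \<and> fst (p n) = tgt h \<and> mp R h (snd (p (n - 1))) = snd (p n)")
        case True
        then have "snd (p (n - 1)) = x" using pn1 x unfolding nzs_def by auto
        then show False using True p(2) ne by simp
      next
        case False
        then have "fst (p n) = src h" using w unfolding wit_def by auto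
        then show False using p(2) nl by simp
      qed
    qed
    define v where "v m = (if m \<le> n then fst (p m) else src h)" for m
    have "\<exists>vs es. unoriented_cycle E src tgt vs es"
    proof (rule walk_cycle[of "Suc n" v "e(n := h)"])
      show "1 \<le> Suc n" by simp
      show "v (Suc n) = v 0" using p by (simp add: v_def)
      show "\<forall>m<Suc n. (e(n := h)) m \<in> E \<and> {src ((e(n := h)) m), tgt ((e(n := h)) m)} = {v m, v (Suc m)}"
      proof (intro allI impI)
        fix m assume m: "m < Suc n"
        show "(e(n := h)) m \<in> E \<and> {src ((e(n := h)) m), tgt ((e(n := h)) m)} = {v m, v (Suc m)}"
        proof (cases "m = n")
          case True then show ?thesis using h p(2) by (auto simp: v_def)
        next
          case False
          then have mn: "m < n" using m by simp
          have "{src (e m), tgt (e m)} = {fst (p m), fst (p (Suc m))}" "e m \<in> E"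
            using e(1) mn wit_edge[of src tgt R "e m" "p m" "p (Suc m)"] by blast+
          then show ?thesis using False mn by (auto simp: v_def)
        qed
      qed
      show "\<forall>m. Suc m < Suc n \<longrightarrow> (e(n := h)) m \<noteq> (e(n := h)) (Suc m)"
      proof (intro allI impI)
        fix m assume m: "Suc m < Suc n"
        show "(e(n := h)) m \<noteq> (e(n := h)) (Suc m)"
        proof (cases "Suc m = n")
          case True then show ?thesis using last by auto
        next
          case False then show ?thesis using e(2) m by auto
        qed
      qed
    qed
    then show False using tree unfolding tree_quiver_def by blast
  qed
  then have "bij_betw (mp R h) (sp R (src h)) (sp R (tgt h))"
    unfolding bij_betw_def using x y m0 by (auto simp: inj_on_def)
  then show ?thesis using mo unfolding f1_iso_def by blast
qed

lemma indec_connected: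
  assumes tree: "tree_quiver I E src tgt" and ind: "indecomposable I E src tgt R"
  shows "connected_in E src tgt (dim_one_support I R)"
proof -
  let ?S = "dim_one_support I R"
  have inS: "fst c \<in> ?S" if cN: "c \<in> nzs I R" for c
  proof -
    obtain i z where c: "c = (i, z)" "i \<in> I" "z \<in> sp R i" "z \<noteq> bp R i" using cN by (cases c) (auto simp: nzs_def)
    then show ?thesis using indec_shape[OF tree ind c(2)] by (auto simp: dim_one_support_def)
  qed
  have pr: "(adj_in E src tgt ?S)\<^sup>*\<^sup>* (fst a) (fst b)" if "(est I E src tgt R)\<^sup>*\<^sup>* a b" for a b
    using that
  proof (induction rule: rtranclp_induct)
    case base then show ?case by simp
  next
    case (step b c)
    have bc: "b \<in> nzs I R" "c \<in> nzs I R" and "\<exists>h\<in>E. wit src tgt R h b c" using step(2) unfolding est_def by auto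
    then obtain h where "h \<in> E" "wit src tgt R h b c" by blast
    then have "adj_in E src tgt ?S (fst b) (fst c)"
      using inS[OF bc(1)] inS[OF bc(2)] unfolding adj_in_def wit_def by (metis (no_types))
    then show ?case using step(3) by simp
  qed
  show ?thesis unfolding connected_in_def
  proof (intro ballI)
    fix u w assume u: "u \<in> ?S" and w: "w \<in> ?S"
    obtain x where x: "x \<noteq> bp R u" "sp R u = {bp R u, x}" "u \<in> I"
      using u indec_shape[OF tree ind, of u] unfolding dim_one_support_def by auto
    obtain y where y: "y \<noteq> bp R w" "sp R w = {bp R w, y}" "w \<in> I"
      using w indec_shape[OF tree ind, of w] unfolding dim_one_support_def by auto
    have N: "(u, x) \<in> nzs I R" "(w, y) \<in> nzs I R" using x y unfolding nzs_def by auto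
    show "(adj_in E src tgt ?S)\<^sup>*\<^sup>* u w"
      using pr[OF indec_conn[OF ind tree_q[OF tree] N]] by simp
  qed
qed



lemma ds_parts:
  assumes "is_direct_sum I E src tgt R U W"
  shows "is_rep I E src tgt U" "is_rep I E src tgt W"
    "\<And>i. i \<in> I \<Longrightarrow> sp U i \<union> sp W i = sp R i"
    "\<And>i. i \<in> I \<Longrightarrow> sp U i \<inter> sp W i = {bp R i}"
    "\<And>h x. h \<in> E \<Longrightarrow> x \<in> sp U (src h) \<Longrightarrow> mp U h x = mp R h x"
    "\<And>h x. h \<in> E \<Longrightarrow> x \<in> sp W (src h) \<Longrightarrow> mp W h x = mp R h x"
  using assms unfolding is_direct_sum_def by simp_all

lemma rep_img: "is_rep I E src tgt R \<Longrightarrow> h \<in> E \<Longrightarrow> mp R h ` sp R (src h) \<subseteq> sp R (tgt h)"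
  by (simp add: is_rep_def f1_morph_def)

lemma construct:
  fixes I :: "'v set" and E :: "'e set"
  assumes tree: "tree_quiver I E src tgt" and S: "S \<subseteq> I" "S \<noteq> {}" and con: "connected_in E src tgt S"
  shows "\<exists>R :: ('v, 'e, bool) rep. indecomposable I E src tgt R \<and> dim_one_support I R = S"
proof -
  define R :: "('v, 'e, bool) rep" where "R = \<lparr>sp = (\<lambda>i. if i \<in> S then {False, True} else {False}),
     bp = (\<lambda>i. False), mp = (\<lambda>h x. if src h \<in> S \<and> tgt h \<in> S then x else False)\<rparr>"
  have rep: "is_rep I E src tgt R"
    unfolding is_rep_def f1_space_def f1_morph_def by (auto simp: R_def)
  have supp: "dim_one_support I R = S"
    using S unfolding dim_one_support_def f1_dim_def by (auto simp: R_def)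
  have nz: "rep_nonzero I R"
    using S unfolding rep_nonzero_def f1_dim_def by (auto simp: R_def)
  have nodec: False if U: "rep_nonzero I U" and W: "rep_nonzero I W" and ds: "is_direct_sum I E src tgt R U W"
    for U W :: "('v, 'e, bool) rep"
  proof -
    have un: "sp U i \<union> sp W i = sp R i" if "i \<in> I" for i
      using ds_parts(3)[OF ds that] .
    have sub: "sp U i \<subseteq> sp R i" "sp W i \<subseteq> sp R i" if "i \<in> I" for i
      using un[OF that] by auto
    have dis: "sp U i \<inter> sp W i = {False}" if "i \<in> I" for i
      using ds_parts(4)[OF ds that] by (simp add: R_def)
    have two: "\<exists>i\<in>S. True \<in> sp X i" if X: "rep_nonzero I X" "\<And>i. i \<in> I \<Longrightarrow> sp X i \<subseteq> sp R i" for X :: "('v, 'e, bool) rep"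
    proof -
      obtain i where i: "i \<in> I" "card (sp X i) - 1 \<noteq> 0" using X(1) unfolding rep_nonzero_def f1_dim_def by auto
      have t: "True \<in> sp X i"
      proof (rule ccontr)
        assume "True \<notin> sp X i"
        then have "sp X i \<subseteq> {False}"
        proof (intro subsetI)
          fix x assume "True \<notin> sp X i" "x \<in> sp X i"
          then have "x \<noteq> True" by auto
          then show "x \<in> {False}" by simp
        qed
        then have "card (sp X i) \<le> card {False}" by (intro card_mono) auto
        then show False using i(2) by simp
      qed
      then have "i \<in> S" using X(2)[OF i(1)] by (auto simp: R_def split: if_splits)
      then show ?thesis using t by blast
    qed
    obtain i where i: "i \<in> S" "True \<in> sp U i" using two[OF U sub(1)] by blast
    obtain j where j: "j \<in> S" "True \<in> sp W j" using two[OF W sub(2)] by blast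
    note repU = ds_parts(1)[OF ds] and repW = ds_parts(2)[OF ds]
    note agree = ds_parts(5,6)[OF ds]
    have imU: "mp U h ` sp U (src h) \<subseteq> sp U (tgt h)" if "h \<in> E" for h
      using rep_img[OF repU that] .
    have imW: "mp W h ` sp W (src h) \<subseteq> sp W (tgt h)" if "h \<in> E" for h
      using rep_img[OF repW that] .
    have q: "src h \<in> I" "tgt h \<in> I" if "h \<in> E" for h using tree_q[OF tree] that by auto
    have propU: "True \<in> sp U v" if "(adj_in E src tgt S)\<^sup>*\<^sup>* i v" for v
      using that
    proof (induction rule: rtranclp_induct)
      case base then show ?case using i by simp
    next
      case (step u v)
      from step(2) obtain h where uv: "u \<in> S" "v \<in> S" "h \<in> E"
        "(src h = u \<and> tgt h = v) \<or> (src h = v \<and> tgt h = u)" unfolding adj_in_def by auto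
      have mid: "mp R h True = True" using uv by (auto simp: R_def)
      show ?case
      proof (cases "src h = u \<and> tgt h = v")
        case True
        then have "mp U h True \<in> sp U v" using imU[OF uv(3)] step(3) by auto
        then show ?thesis using agree(1)[OF uv(3)] True step(3) mid by auto
      next
        case False
        then have sv: "src h = v" "tgt h = u" using uv(4) by auto
        have "True \<notin> sp W v"
        proof
          assume tw: "True \<in> sp W v"
          then have "mp W h True \<in> sp W u" using imW[OF uv(3)] sv by auto
          then have "True \<in> sp W u" using agree(2)[OF uv(3)] tw sv mid by auto
          then show False using step(3) dis[OF q(2)[OF uv(3)]] sv by auto
        qed
        moreover have "True \<in> sp R v" using uv by (simp add: R_def)
        ultimately show ?thesis using un[OF q(1)[OF uv(3)]] sv by auto
      qed
    qed
    have "(adj_in E src tgt S)\<^sup>*\<^sup>* i j" using con i j unfolding connected_in_def by auto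
    then have "True \<in> sp U j" by (rule propU)
    then show False using j dis[of j] S by auto
  qed
  have "indecomposable I E src tgt R" unfolding indecomposable_def using rep nz nodec by blast
  then show ?thesis using supp by blast
qed



lemma iso_maps:
  assumes "f1_iso V b W c f" "V = {b, x}" "W = {c, y}" "x \<noteq> b" "y \<noteq> c"
  shows "f x = y"
proof -
  have fb: "f b = c" and bij: "bij_betw f V W" using assms(1) unfolding f1_iso_def f1_morph_def by auto
  have "f x \<in> W" using bij assms(2) bij_betwE by blast
  moreover have "f x \<noteq> f b" using bij assms(2,4) unfolding bij_betw_def inj_on_def by blast
  ultimately show ?thesis using fb assms(3) by auto
qed

lemma some_other: "V = {b, x} \<Longrightarrow> x \<noteq> b \<Longrightarrow> (SOME y. y \<in> V \<and> y \<noteq> b) = x"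
  by (rule some_equality) auto

lemma supp_iff:
  assumes tree: "tree_quiver I E src tgt" and ind: "indecomposable I E src tgt R" and i: "i \<in> I"
  shows "i \<in> dim_one_support I R \<longleftrightarrow> (\<exists>x. x \<noteq> bp R i \<and> sp R i = {bp R i, x})"
    "i \<notin> dim_one_support I R \<longleftrightarrow> sp R i = {bp R i}"
  using indec_shape[OF tree ind i] i unfolding dim_one_support_def by (auto simp: f1_dim_def)

lemma iso_reps:
  fixes R :: "('v, 'e, 'a) rep" and R' :: "('v, 'e, 'b) rep"
  assumes tree: "tree_quiver I E src tgt" and ind: "indecomposable I E src tgt R"
    and ind': "indecomposable I E src tgt R'" and eq: "dim_one_support I R = dim_one_support I R'"
  shows "rep_iso I E src tgt R R'"
proof -
  define \<phi> :: "'v \<Rightarrow> 'a \<Rightarrow> 'b" where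
    "\<phi> i x = (if x = bp R i then bp R' i else (SOME y. y \<in> sp R' i \<and> y \<noteq> bp R' i))" for i x
  let ?S = "dim_one_support I R"
  have rep: "is_rep I E src tgt R" using ind unfolding indecomposable_def by blast
  have rep': "is_rep I E src tgt R'" using ind' unfolding indecomposable_def by blast
  have case1: "sp R i = {bp R i} \<and> sp R' i = {bp R' i}" if "i \<in> I" "i \<notin> ?S" for i
    using supp_iff(2)[OF tree ind that(1)] supp_iff(2)[OF tree ind' that(1)] that eq by auto
  have case2: "\<exists>x y. x \<noteq> bp R i \<and> sp R i = {bp R i, x} \<and> y \<noteq> bp R' i \<and> sp R' i = {bp R' i, y} \<and> \<phi> i x = y"
    if iI: "i \<in> I" and iS: "i \<in> ?S" for i
  proof -
    obtain x where x: "x \<noteq> bp R i" "sp R i = {bp R i, x}" using supp_iff(1)[OF tree ind iI] iS by auto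
    obtain y where y: "y \<noteq> bp R' i" "sp R' i = {bp R' i, y}" using supp_iff(1)[OF tree ind' iI] iS eq by auto
    have "\<phi> i x = y" using x y some_other[OF y(2) y(1)] by (simp add: \<phi>_def)
    then show ?thesis using x y by blast
  qed
  have isos: "f1_iso (sp R i) (bp R i) (sp R' i) (bp R' i) (\<phi> i)" if i: "i \<in> I" for i
  proof (cases "i \<in> ?S")
    case False
    then show ?thesis using case1[OF i False] unfolding f1_iso_def f1_morph_def bij_betw_def
      by (simp add: \<phi>_def)
  next
    case True
    then obtain x y where xy: "x \<noteq> bp R i" "sp R i = {bp R i, x}" "y \<noteq> bp R' i" "sp R' i = {bp R' i, y}" "\<phi> i x = y"
      using case2[OF i] by blast
    have "\<phi> i (bp R i) = bp R' i" by (simp add: \<phi>_def)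
    then show ?thesis using xy unfolding f1_iso_def f1_morph_def bij_betw_def by (auto simp: inj_on_def)
  qed
  have comm: "\<phi> (tgt h) (mp R h x) = mp R' h (\<phi> (src h) x)" if h: "h \<in> E" and x: "x \<in> sp R (src h)" for h x
  proof -
    have I: "src h \<in> I" "tgt h \<in> I" using tree_q[OF tree] h by auto
    have m0: "mp R h (bp R (src h)) = bp R (tgt h)" "mp R h ` sp R (src h) \<subseteq> sp R (tgt h)"
      using rep h unfolding is_rep_def f1_morph_def by auto
    have m0': "mp R' h (bp R' (src h)) = bp R' (tgt h)" "mp R' h ` sp R' (src h) \<subseteq> sp R' (tgt h)"
      using rep' h unfolding is_rep_def f1_morph_def by auto
    show ?thesis
    proof (cases "x = bp R (src h)")
      case True
      then show ?thesis using m0 m0' by (simp add: \<phi>_def)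
    next
      case False
      then have sS: "src h \<in> ?S" using case1[OF I(1)] x by auto
      obtain x0 x' where xx: "x0 \<noteq> bp R (src h)" "sp R (src h) = {bp R (src h), x0}"
          "x' \<noteq> bp R' (src h)" "sp R' (src h) = {bp R' (src h), x'}" "\<phi> (src h) x0 = x'"
        using case2[OF I(1) sS] by blast
      have "x = x0" using xx x False by auto
      show ?thesis
      proof (cases "tgt h \<in> ?S")
        case True
        obtain y0 y' where yy: "y0 \<noteq> bp R (tgt h)" "sp R (tgt h) = {bp R (tgt h), y0}"
            "y' \<noteq> bp R' (tgt h)" "sp R' (tgt h) = {bp R' (tgt h), y'}" "\<phi> (tgt h) y0 = y'"
          using case2[OF I(2) True] by blast
        have d: "f1_dim (sp R (src h)) = 1" "f1_dim (sp R (tgt h)) = 1"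
          using sS True unfolding dim_one_support_def by auto
        have d': "f1_dim (sp R' (src h)) = 1" "f1_dim (sp R' (tgt h)) = 1"
          using sS True eq unfolding dim_one_support_def by auto
        have "mp R h x0 = y0" by (rule iso_maps[OF indec_iso[OF tree ind h d] xx(2) yy(2) xx(1) yy(1)])
        moreover have "mp R' h x' = y'" by (rule iso_maps[OF indec_iso[OF tree ind' h d'] xx(4) yy(4) xx(3) yy(3)])
        ultimately show ?thesis using \<open>x = x0\<close> xx(5) yy(5) by simp
      next
        case False
        have c: "sp R (tgt h) = {bp R (tgt h)}" "sp R' (tgt h) = {bp R' (tgt h)}" using case1[OF I(2) False] by auto
        have "mp R h x = bp R (tgt h)" using m0(2) x c(1) by auto
        moreover have "mp R' h x' = bp R' (tgt h)" using m0'(2) xx(4) c(2) by auto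
        ultimately show ?thesis using \<open>x = x0\<close> xx(5) by (simp add: \<phi>_def)
      qed
    qed
  qed
  show ?thesis unfolding rep_iso_def using isos comm by blast
qed


theorem mainTheorem7:
  fixes I :: "'v set" and E :: "'e set" and src tgt :: "'e \<Rightarrow> 'v"
  assumes tree: "tree_quiver I E src tgt"
  shows
    \<comment> \<open>structure of an indecomposable representation\<close>
    "(\<forall>R :: ('v, 'e, 'a) rep. indecomposable I E src tgt R \<longrightarrow>
        (\<forall>i\<in>I. f1_dim (sp R i) = 0 \<or> f1_dim (sp R i) = 1) \<and>
        connected_in E src tgt (dim_one_support I R) \<and>
        (\<forall>h\<in>E. f1_dim (sp R (src h)) = 1 \<and> f1_dim (sp R (tgt h)) = 1 \<longrightarrow>
              f1_iso (sp R (src h)) (bp R (src h)) (sp R (tgt h)) (bp R (tgt h)) (mp R h)))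
     \<and>
     \<comment> \<open>bijection: iso classes of indecomposables <-> nonempty connected subgraphs\<close>
     (\<forall>R :: ('v, 'e, 'a) rep. indecomposable I E src tgt R \<longrightarrow>
        dim_one_support I R \<noteq> {})
     \<and>
     (\<forall>S. S \<subseteq> I \<and> S \<noteq> {} \<and> connected_in E src tgt S \<longrightarrow>
        (\<exists>R :: ('v, 'e, bool) rep. indecomposable I E src tgt R \<and> dim_one_support I R = S))
     \<and>
     (\<forall>(R :: ('v, 'e, 'a) rep) (R' :: ('v, 'e, 'b) rep).
        indecomposable I E src tgt R \<and> indecomposable I E src tgt R' \<and>
        dim_one_support I R = dim_one_support I R' \<longrightarrow> rep_iso I E src tgt R R')"
  proof (intro conjI allI impI)
  fix R :: "('v, 'e, 'a) rep"
  assume ind: "indecomposable I E src tgt R"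
  show "\<forall>i\<in>I. f1_dim (sp R i) = 0 \<or> f1_dim (sp R i) = 1"
    using indec_shape[OF tree ind] by blast
  show "connected_in E src tgt (dim_one_support I R)" by (rule indec_connected[OF tree ind])
  show "\<forall>h\<in>E. f1_dim (sp R (src h)) = 1 \<and> f1_dim (sp R (tgt h)) = 1 \<longrightarrow>
              f1_iso (sp R (src h)) (bp R (src h)) (sp R (tgt h)) (bp R (tgt h)) (mp R h)"
    using indec_iso[OF tree ind] by blast
next
  fix R :: "('v, 'e, 'a) rep"
  assume ind: "indecomposable I E src tgt R"
  then obtain i where i: "i \<in> I" "f1_dim (sp R i) \<noteq> 0"
    unfolding indecomposable_def rep_nonzero_def by blast
  then have "f1_dim (sp R i) = 1" using indec_shape[OF tree ind i(1)] by auto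
  then show "dim_one_support I R \<noteq> {}" using i unfolding dim_one_support_def by auto
next
  fix S assume "S \<subseteq> I \<and> S \<noteq> {} \<and> connected_in E src tgt S"
  then show "\<exists>R :: ('v, 'e, bool) rep. indecomposable I E src tgt R \<and> dim_one_support I R = S"
    using construct[OF tree] by blast
next
  fix R :: "('v, 'e, 'a) rep" and R' :: "('v, 'e, 'b) rep"
  assume "indecomposable I E src tgt R \<and> indecomposable I E src tgt R' \<and>
        dim_one_support I R = dim_one_support I R'"
  then show "rep_iso I E src tgt R R'" using iso_reps[OF tree] by blast
qed

end
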